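(* Let $\tau\in\mathbb R$ and let $(\vartheta(s),\omega(s))$, $s\in J$ ($J$ an interval containing $0$), be a $C^1$ solution with $\vartheta(s)\in(-\pi/2,\pi/2)$ of Hamilton's equations for $H(\vartheta,\omega)=\frac12(\omega^2+\tau^2\tan^2\vartheta)$, namely $\dot\vartheta=\omega$, $\dot\omega=-\tau^2\tan\vartheta/\cos^2\vartheta$, with $\vartheta(0)=0$. Let $E\ge0$ be defined by $E^2=2H(\vartheta(s),\omega(s))$ (a constant along the solution), assume $E^2+\tau^2>0$ and set $\Omega=\sqrt{E^2+\tau^2}$. Then $\sin^2\vartheta(s)=\frac{E^2}{\Omega^2}\sin^2(\Omega s)$ for all $s\in J$. *)

theory Defs
  imports "HOL-Analysis.Analysis"
begin

definition hamH :: "real \<Rightarrow> real \<Rightarrow> real \<Rightarrow> real" where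
  "hamH \<tau> th w = (w^2 + \<tau>^2 * (tan th)^2) / 2"

end

theory Submission
  imports Defs
begin

lemma trig_aux: fixes S C E2 T :: real
  assumes "C \<noteq> 0" "S^2 + C^2 = 1"
  shows "-S*(E2 - T*(S/C)^2) + C*(-(T*(S/C)/C^2)) + (E2+T)*S = 0"
proof -
  have 1: "C*(T*(S/C)/C^2) = T*S/C^2" using assms(1) by (simp add: power2_eq_square)
  have 2: "T*S/C^2 = T*S*(S/C)^2 + T*S"
  proof -
    have "T*S/C^2 = T*S*(S^2+C^2)/C^2" using assms(2) by simp
    also have "\<dots> = T*S*(S/C)^2 + T*S" using assms(1) by (simp add: field_simps power2_eq_square)
    finally show ?thesis .
  qed
  show ?thesis using 1 2 by (simp add: algebra_simps)
qed

theorem lemma4p12: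
  fixes \<tau> E :: real and J :: "real set" and th w :: "real \<Rightarrow> real"
  assumes J: "is_interval J" "0 \<in> J"
    and C1: "continuous_on J th" "continuous_on J w"
    and range: "\<And>s. s \<in> J \<Longrightarrow> th s \<in> {-pi/2<..<pi/2}"
    and eq1: "\<And>s. s \<in> J \<Longrightarrow> (th has_real_derivative w s) (at s within J)"
    and eq2: "\<And>s. s \<in> J \<Longrightarrow>
               (w has_real_derivative (- (\<tau>^2 * tan (th s) / (cos (th s))^2))) (at s within J)"
    and init: "th 0 = 0"
    and E: "E \<ge> 0" "E^2 = 2 * hamH \<tau> (th 0) (w 0)"
    and pos: "E^2 + \<tau>^2 > 0"
  shows "\<forall>s\<in>J. (sin (th s))^2
           = E^2 / (sqrt (E^2 + \<tau>^2))^2 * (sin (sqrt (E^2 + \<tau>^2) * s))^2"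
proof -
  have cvx: "convex J" using J(1) is_interval_convex by blast
  have cpos: "cos (th s) > 0" if "s \<in> J" for s
    using range[OF that] by (intro cos_gt_zero_pi) auto
  have E0: "E^2 = (w 0)^2" using E(2) init by (simp add: hamH_def)
  have "((\<lambda>s. w s ^2 + \<tau>^2 * tan (th s) ^2) has_real_derivative 0) (at s within J)"
    if s: "s \<in> J" for s
  proof -
    have c: "cos (th s) \<noteq> 0" using cpos[OF s] by simp
    show ?thesis
      apply (rule derivative_eq_intros eq1[OF s] eq2[OF s] refl c)+
      using c by (simp add: field_simps power2_eq_square)
  qed
  from has_field_derivative_zero_constant[OF cvx this] obtain c
    where c: "\<And>s. s \<in> J \<Longrightarrow> w s ^2 + \<tau>^2 * tan (th s) ^2 = c" by blast
  have en: "w s ^2 + \<tau>^2 * tan (th s) ^2 = E^2" if "s \<in> J" for s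
    using c[OF that] c[OF J(2)] init E0 by simp
  define \<Omega> where "\<Omega> = sqrt (E^2 + \<tau>^2)"
  have Om: "\<Omega>^2 = E^2 + \<tau>^2" "\<Omega> > 0" using pos by (auto simp: \<Omega>_def)
  define a where "a = w 0"
  define v where "v s = sin (th s) - a / \<Omega> * sin (\<Omega> * s)" for s
  define vp where "vp s = cos (th s) * w s - a * cos (\<Omega> * s)" for s
  have key: "- sin (th s) * w s * w s + cos (th s) * (- (\<tau>^2 * tan (th s) / (cos (th s))^2))
     + a * (sin (\<Omega> * s) * \<Omega>) + \<Omega>^2 * v s = 0" if s: "s \<in> J" for s
  proof -
    have cs: "cos (th s) \<noteq> 0" using cpos[OF s] by simp
    have w2: "w s * w s = E^2 - \<tau>^2 * tan (th s)^2" using en[OF s] by (simp add: power2_eq_square)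
    have t: "tan (th s) = sin (th s) / cos (th s)" by (simp add: tan_def)
    have sc: "sin (th s)^2 + cos (th s)^2 = 1" by simp
    have "- sin (th s) * w s * w s = - sin (th s) * (E^2 - \<tau>^2 * tan (th s)^2)"
      using w2 by (simp add: mult.assoc)
    moreover have "\<Omega>^2 * v s = (E^2 + \<tau>^2) * sin (th s) - a * \<Omega> * sin (\<Omega> * s)"
    proof -
      have aux: "\<Omega>^2 * (a / \<Omega> * sin (\<Omega> * s)) = a * \<Omega> * sin (\<Omega> * s)"
        using Om(2) by (simp add: power2_eq_square)
      show ?thesis using Om(1) aux by (simp add: v_def right_diff_distrib)
    qed
    moreover have "- sin (th s) * (E^2 - \<tau>^2 * tan (th s)^2) + cos (th s) * (- (\<tau>^2 * tan (th s) / (cos (th s))^2))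
       + (E^2 + \<tau>^2) * sin (th s) = 0"
      unfolding t using trig_aux[OF cs sc] by simp
    ultimately show ?thesis by (simp add: algebra_simps)
  qed
  have "((\<lambda>s. vp s ^2 + \<Omega>^2 * v s ^2) has_real_derivative 0) (at s within J)"
    if s: "s \<in> J" for s
  proof -
    have c: "cos (th s) \<noteq> 0" using cpos[OF s] by simp
    have d: "((\<lambda>s. vp s ^2 + \<Omega>^2 * v s ^2) has_real_derivative
       2 * vp s * (- sin (th s) * w s * w s + cos (th s) * (- (\<tau>^2 * tan (th s) / (cos (th s))^2))
     + a * (sin (\<Omega> * s) * \<Omega>)) + \<Omega>^2 * (2 * v s * vp s)) (at s within J)"
      unfolding vp_def v_def
      apply (rule derivative_eq_intros eq1[OF s] eq2[OF s] refl)+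
      using Om by (simp add: field_simps power2_eq_square)
    have "2 * vp s * (- sin (th s) * w s * w s + cos (th s) * (- (\<tau>^2 * tan (th s) / (cos (th s))^2))
     + a * (sin (\<Omega> * s) * \<Omega>)) + \<Omega>^2 * (2 * v s * vp s) =
       2 * vp s * (- sin (th s) * w s * w s + cos (th s) * (- (\<tau>^2 * tan (th s) / (cos (th s))^2))
     + a * (sin (\<Omega> * s) * \<Omega>) + \<Omega>^2 * v s)" by (simp add: algebra_simps)
    also have "\<dots> = 0" using key[OF s] by simp
    finally show ?thesis using d by simp
  qed
  from has_field_derivative_zero_constant[OF cvx this] obtain g
    where g: "\<And>s. s \<in> J \<Longrightarrow> vp s ^2 + \<Omega>^2 * v s ^2 = g" by blast
  have g0: "g = 0" using g[OF J(2)] init by (simp add: vp_def v_def a_def)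
  show ?thesis
  proof
    fix s assume s: "s \<in> J"
    have "\<Omega>^2 * v s ^2 = 0" using g[OF s] g0
      by (smt (verit) zero_le_power2 mult_nonneg_nonneg)
    hence "v s = 0" using Om(2) by simp
    hence "sin (th s) = a / \<Omega> * sin (\<Omega> * s)" by (simp add: v_def)
    hence "sin (th s)^2 = a^2 / \<Omega>^2 * sin (\<Omega> * s)^2" by (simp add: power_mult_distrib power_divide)
    thus "(sin (th s))^2 = E^2 / (sqrt (E^2 + \<tau>^2))^2 * (sin (sqrt (E^2 + \<tau>^2) * s))^2"
      using E0 by (simp add: a_def \<Omega>_def)
  qed
qed

end
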